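(* Let $H$ be a maximal outerplanar graph of diameter $3$ with maximum degree $\Delta=\Delta(H)$, containing vertices $v_0,v_1,\dots,v_5$ which induce a copy of $G_6^1$ (with edges $v_1v_0, v_0v_4, v_4v_3, v_3v_5, v_5v_2, v_2v_1, v_0v_2, v_0v_3, v_2v_3$), and such that $d(v_0)=d(v_2)=d(v_3)=\Delta$. Then $\chi'_{st}(H)\ge \Delta+2$.
   Context: A star edge coloring of a graph $G$ is a proper edge coloring of $G$ in which no path or cycle with four edges is bichromatic. The star chromatic index $\chi'_{st}(G)$ is the minimum number of colors in a star edge coloring of $G$. An outerplanar graph is a graph drawable in the plane without crossings with all vertices on the outer face; it is maximal outerplanar if adding any edge between two nonadjacent vertices yields a non-outerplanar graph. $d(v)$ is the degree of $v$ in $H$. (In the paper this graph is denoted $H_{n_\Delta}$.) *)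

theory Defs
  imports Main
begin

definition simple_graph :: "'a set \<Rightarrow> 'a set set \<Rightarrow> bool" where
  "simple_graph V E \<longleftrightarrow> finite V \<and> (\<forall>e\<in>E. \<exists>x y. e = {x, y} \<and> x \<in> V \<and> y \<in> V \<and> x \<noteq> y)"

definition degree :: "'a set set \<Rightarrow> 'a \<Rightarrow> nat" where
  "degree E v = card {e \<in> E. v \<in> e}"

definition max_degree :: "'a set \<Rightarrow> 'a set set \<Rightarrow> nat" where
  "max_degree V E = Max (degree E ` V)"

definition walk :: "'a set set \<Rightarrow> 'a list \<Rightarrow> bool" where
  "walk E xs \<longleftrightarrow> xs \<noteq> [] \<and> (\<forall>i. Suc i < length xs \<longrightarrow> {xs ! i, xs ! Suc i} \<in> E)"

definition reachable_in :: "'a set set \<Rightarrow> 'a \<Rightarrow> 'a \<Rightarrow> nat \<Rightarrow> bool" where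
  "reachable_in E x y n \<longleftrightarrow>
     (\<exists>xs. walk E xs \<and> hd xs = x \<and> last xs = y \<and> length xs = Suc n)"

definition gdist :: "'a set set \<Rightarrow> 'a \<Rightarrow> 'a \<Rightarrow> nat" where
  "gdist E x y = (LEAST n. reachable_in E x y n)"

definition graph_connected :: "'a set \<Rightarrow> 'a set set \<Rightarrow> bool" where
  "graph_connected V E \<longleftrightarrow> (\<forall>x\<in>V. \<forall>y\<in>V. \<exists>n. reachable_in E x y n)"

definition has_diameter :: "'a set \<Rightarrow> 'a set set \<Rightarrow> nat \<Rightarrow> bool" where
  "has_diameter V E d \<longleftrightarrow> graph_connected V E \<and>
     Max {gdist E x y | x y. x \<in> V \<and> y \<in> V} = d"

text \<open>Outerplanarity (combinatorial form): the vertices can be placed in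
  convex position (numbered 0..n-1 around a circle) so that no two edges,
  drawn as straight chords, cross.\<close>

definition outerplanar :: "'a set \<Rightarrow> 'a set set \<Rightarrow> bool" where
  "outerplanar V E \<longleftrightarrow> (\<exists>f :: 'a \<Rightarrow> nat. bij_betw f V {..<card V} \<and>
     (\<forall>a b c d. {a, b} \<in> E \<longrightarrow> {c, d} \<in> E \<longrightarrow>
        \<not> (f a < f c \<and> f c < f b \<and> f b < f d)))"

definition maximal_outerplanar :: "'a set \<Rightarrow> 'a set set \<Rightarrow> bool" where
  "maximal_outerplanar V E \<longleftrightarrow> simple_graph V E \<and> outerplanar V E \<and>
     (\<forall>x\<in>V. \<forall>y\<in>V. x \<noteq> y \<longrightarrow> {x, y} \<notin> E \<longrightarrow> \<not> outerplanar V (insert {x, y} E))"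

definition proper_edge_coloring :: "'a set set \<Rightarrow> ('a set \<Rightarrow> nat) \<Rightarrow> bool" where
  "proper_edge_coloring E c \<longleftrightarrow>
     (\<forall>e\<in>E. \<forall>e'\<in>E. e \<noteq> e' \<longrightarrow> e \<inter> e' \<noteq> {} \<longrightarrow> c e \<noteq> c e')"

text \<open>A path with four edges x0 x1 x2 x3 x4 (distinct vertices) or a cycle with
  four edges x0 x1 x2 x3 x0 (x4 = x0, x0..x3 distinct) is bichromatic if its
  four edges receive exactly two colours.\<close>

definition star_edge_coloring :: "'a set set \<Rightarrow> ('a set \<Rightarrow> nat) \<Rightarrow> bool" where
  "star_edge_coloring E c \<longleftrightarrow> proper_edge_coloring E c \<and>
     (\<forall>x0 x1 x2 x3 x4.
        distinct [x0, x1, x2, x3] \<and> (x4 = x0 \<or> distinct [x0, x1, x2, x3, x4]) \<and>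
        {x0, x1} \<in> E \<and> {x1, x2} \<in> E \<and> {x2, x3} \<in> E \<and> {x3, x4} \<in> E \<longrightarrow>
        card (c ` {{x0, x1}, {x1, x2}, {x2, x3}, {x3, x4}}) \<noteq> 2)"

definition star_chromatic_index :: "'a set set \<Rightarrow> nat" where
  "star_chromatic_index E =
     (LEAST k. \<exists>c. star_edge_coloring E c \<and> c ` E \<subseteq> {..<k})"

definition G61_edges :: "nat set set" where
  "G61_edges = {{1,0}, {0,4}, {4,3}, {3,5}, {5,2}, {2,1}, {0,2}, {0,3}, {2,3}}"

end

theory Submission
  imports Defs
begin

lemma sg_neq:
  assumes "simple_graph V E" "{x, y} \<in> E"
  shows "x \<noteq> y"
  using assms unfolding simple_graph_def by (metis doubleton_eq_iff insert_absorb2)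

lemma proper_neq:
  assumes "proper_edge_coloring E c" "e \<in> E" "e' \<in> E" "e \<noteq> e'" "x \<in> e" "x \<in> e'"
  shows "c e \<noteq> c e'"
  using assms unfolding proper_edge_coloring_def by blast

lemma bichrom:
  assumes sg: "simple_graph V E" and st: "star_edge_coloring E c"
    and e1: "{x1, w} \<in> E" and e2: "{x1, x2} \<in> E" and e3: "{x2, x3} \<in> E" and e4: "{x3, z} \<in> E"
    and c1: "c {x1, w} = c {x2, x3}" and c2: "c {x1, x2} = c {x3, z}"
    and d: "x1 \<noteq> x2" "x2 \<noteq> x3" "x1 \<noteq> x3"
  shows False
proof -
  have pr: "proper_edge_coloring E c" using st unfolding star_edge_coloring_def by blast
  have ab: "c {x1, x2} \<noteq> c {x2, x3}"
    by (rule proper_neq[OF pr e2 e3, of x2]) (use d in \<open>auto simp: doubleton_eq_iff\<close>)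
  have wx1: "w \<noteq> x1" using sg_neq[OF sg e1] by auto
  have wx2: "w \<noteq> x2" using c1 ab by auto
  have wx3: "w \<noteq> x3"
  proof
    assume "w = x3"
    hence "c {x1, x3} = c {x2, x3}" using c1 by simp
    moreover have "c {x1, x3} \<noteq> c {x2, x3}"
    proof (rule proper_neq[OF pr _ e3, of _ x3])
      show "{x1, x3} \<in> E" using e1 \<open>w = x3\<close> by simp
      show "{x1, x3} \<noteq> {x2, x3}" using d by (simp add: doubleton_eq_iff)
    qed auto
    ultimately show False by simp
  qed
  have zx3: "z \<noteq> x3" using sg_neq[OF sg e4] by auto
  have zx2: "z \<noteq> x2" using c2 ab by (auto simp: insert_commute)
  have zx1: "z \<noteq> x1"
  proof
    assume "z = x1"
    hence "c {x1, x2} = c {x3, x1}" using c2 by simp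
    moreover have "c {x1, x2} \<noteq> c {x3, x1}"
    proof (rule proper_neq[OF pr e2, of _ x1])
      show "{x3, x1} \<in> E" using e4 \<open>z = x1\<close> by simp
      show "{x1, x2} \<noteq> {x3, x1}" using d by (simp add: doubleton_eq_iff)
    qed auto
    ultimately show False by simp
  qed
  have di: "distinct [w, x1, x2, x3]" using wx1 wx2 wx3 d by auto
  have di2: "z = w \<or> distinct [w, x1, x2, x3, z]" using di zx1 zx2 zx3 by auto
  have "c ` {{w, x1}, {x1, x2}, {x2, x3}, {x3, z}} = {c {x2, x3}, c {x1, x2}}"
    using c1 c2 by (auto simp: insert_commute)
  hence "card (c ` {{w, x1}, {x1, x2}, {x2, x3}, {x3, z}}) = 2" using ab by simp
  moreover have "{w, x1} \<in> E" using e1 by (simp add: insert_commute)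
  ultimately show False using st di di2 e2 e3 e4 unfolding star_edge_coloring_def by blast
qed

lemma miss:
  assumes sg: "simple_graph V E" and pr: "proper_edge_coloring E c"
    and rng: "c ` E \<subseteq> {..<D+1}" and dg: "degree E v = D"
    and xy: "x < D + 1" "y < D + 1" "x \<noteq> y"
  shows "(\<exists>w. {v, w} \<in> E \<and> c {v, w} = x) \<or> (\<exists>w. {v, w} \<in> E \<and> c {v, w} = y)"
proof (rule ccontr)
  assume na: "\<not> ?thesis"
  define S where "S = {e \<in> E. v \<in> e}"
  have fE: "finite E"
  proof -
    have "E \<subseteq> Pow V" using sg unfolding simple_graph_def by auto
    moreover have "finite V" using sg unfolding simple_graph_def by auto
    ultimately show ?thesis by (meson finite_Pow_iff finite_subset)
  qed
  have fS: "finite S" using fE unfolding S_def by auto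
  have inj: "inj_on c S"
    unfolding inj_on_def S_def using pr unfolding proper_edge_coloring_def by blast
  have cS: "card (c ` S) = D" using card_image[OF inj] dg unfolding degree_def S_def by simp
  have sub: "c ` S \<subseteq> {..<D+1} - {x, y}"
  proof
    fix k assume "k \<in> c ` S"
    then obtain e where e: "e \<in> E" "v \<in> e" "k = c e" unfolding S_def by auto
    then obtain a b where ab: "e = {a, b}" using sg unfolding simple_graph_def by blast
    then obtain w where "e = {v, w}" using e by (auto simp: insert_commute)
    then show "k \<in> {..<D+1} - {x, y}" using na e rng by auto
  qed
  have "card (c ` S) \<le> card ({..<D+1} - {x, y})" by (rule card_mono) (use sub in auto)
  also have "\<dots> = D + 1 - 2" using xy by (subst card_Diff_subset) auto
  finally show False using cS xy by linarith
qed

lemma dist_sets: assumes "distinct [x0, x1, x2, x3]" "x4 = x0 \<or> distinct [x0, x1, x2, x3, x4]"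
  shows "{x0, x1} \<noteq> {x1, x2} \<and> {x0, x1} \<noteq> {x2, x3} \<and> {x0, x1} \<noteq> {x3, x4} \<and>
        {x1, x2} \<noteq> {x2, x3} \<and> {x1, x2} \<noteq> {x3, x4} \<and> {x2, x3} \<noteq> {x3, x4}"
proof -
  have "x0 \<noteq> x1" "x0 \<noteq> x2" "x0 \<noteq> x3" "x1 \<noteq> x2" "x1 \<noteq> x3" "x2 \<noteq> x3"
        "x4 \<noteq> x1" "x4 \<noteq> x2" "x4 \<noteq> x3" using assms by auto
  then show ?thesis by (simp add: doubleton_eq_iff)
qed

lemma card4: assumes "{x0, x1} \<noteq> {x1, x2} \<and> {x0, x1} \<noteq> {x2, x3} \<and> {x0, x1} \<noteq> {x3, x4} \<and>
        {x1, x2} \<noteq> {x2, x3} \<and> {x1, x2} \<noteq> {x3, x4} \<and> {x2, x3} \<noteq> {x3, x4}"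
 shows "card {{x0, x1}, {x1, x2}, {x2, x3}, {x3, (x4::'a)}} = 4" using assms by simp

lemma core:
  assumes sg: "simple_graph V E" and st: "star_edge_coloring E c"
    and rng: "c ` E \<subseteq> {..<D+1}"
    and d0: "degree E v0 = D" and d2: "degree E v2 = D" and d3: "degree E v3 = D"
    and e01: "{v0, v1} \<in> E" and e02: "{v0, v2} \<in> E" and e03: "{v0, v3} \<in> E"
    and e04: "{v0, v4} \<in> E" and e12: "{v1, v2} \<in> E" and e23: "{v2, v3} \<in> E"
    and e25: "{v2, v5} \<in> E" and e34: "{v3, v4} \<in> E" and e35: "{v3, v5} \<in> E"
    and dist: "distinct [v0, v1, v2, v3, v4, v5]"
  shows False
proof -
  have pr: "proper_edge_coloring E c" using st unfolding star_edge_coloring_def by blast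
  define H where "H = (\<lambda>v x. \<exists>w. {v, w} \<in> E \<and> c {v, w} = x)"
  define a where "a = c {v0, v2}"
  define b where "b = c {v0, v3}"
  define d where "d = c {v2, v3}"
  define r where "r = c {v0, v1}"
  define s where "s = c {v1, v2}"
  define t where "t = c {v0, v4}"
  define u where "u = c {v3, v4}"
  define p where "p = c {v2, v5}"
  define q where "q = c {v3, v5}"
  note ne = sg_neq[OF sg]
  have n02: "v0 \<noteq> v2" and n03: "v0 \<noteq> v3" and n23: "v2 \<noteq> v3" and n01: "v0 \<noteq> v1"
    and n12: "v1 \<noteq> v2" and n04: "v0 \<noteq> v4" and n34: "v3 \<noteq> v4" and n25: "v2 \<noteq> v5"
    and n35: "v3 \<noteq> v5"
    using ne[OF e02] ne[OF e03] ne[OF e23] ne[OF e01] ne[OF e12] ne[OF e04] ne[OF e34]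
      ne[OF e25] ne[OF e35] by auto
  have lt: "\<And>e. e \<in> E \<Longrightarrow> c e < D + 1" using rng by auto
  have bq: "b \<noteq> q" unfolding b_def q_def
    by (rule proper_neq[OF pr e03 e35, of v3]) (use dist in \<open>auto simp: doubleton_eq_iff\<close>)
  have ap: "a \<noteq> p" unfolding a_def p_def
    by (rule proper_neq[OF pr e02 e25, of v2]) (use dist in \<open>auto simp: doubleton_eq_iff\<close>)
  have ds: "d \<noteq> s" unfolding d_def s_def
    by (rule proper_neq[OF pr e23 e12, of v2]) (use dist in \<open>auto simp: doubleton_eq_iff\<close>)
  have br: "b \<noteq> r" unfolding b_def r_def
    by (rule proper_neq[OF pr e03 e01, of v0]) (use dist in \<open>auto simp: doubleton_eq_iff\<close>)
  have du: "d \<noteq> u" unfolding d_def u_def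
    by (rule proper_neq[OF pr e23 e34, of v3]) (use dist in \<open>auto simp: doubleton_eq_iff\<close>)
  have at: "a \<noteq> t" unfolding a_def t_def
    by (rule proper_neq[OF pr e02 e04, of v0]) (use dist in \<open>auto simp: doubleton_eq_iff\<close>)
  have M1: "H v2 b \<or> H v2 q" unfolding H_def
    by (rule miss[OF sg pr rng d2]) (use bq lt e03 e35 b_def q_def in auto)
  have M2: "H v3 a \<or> H v3 p" unfolding H_def
    by (rule miss[OF sg pr rng d3]) (use ap lt e02 e25 a_def p_def in auto)
  have M3: "H v0 d \<or> H v0 s" unfolding H_def
    by (rule miss[OF sg pr rng d0]) (use ds lt e23 e12 d_def s_def in auto)
  have M4: "H v2 b \<or> H v2 r" unfolding H_def
    by (rule miss[OF sg pr rng d2]) (use br lt e03 e01 b_def r_def in auto)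
  have M5: "H v0 d \<or> H v0 u" unfolding H_def
    by (rule miss[OF sg pr rng d0]) (use du lt e23 e34 d_def u_def in auto)
  have M6: "H v3 a \<or> H v3 t" unfolding H_def
    by (rule miss[OF sg pr rng d3]) (use at lt e02 e04 a_def t_def in auto)
  have B: "\<not> (H x1 \<beta> \<and> H x3 \<alpha>)"
    if "{x1, x2} \<in> E" "{x2, x3} \<in> E" "c {x1, x2} = \<alpha>" "c {x2, x3} = \<beta>"
       "x1 \<noteq> x2" "x2 \<noteq> x3" "x1 \<noteq> x3" for x1 x2 x3 \<alpha> \<beta>
  proof
    assume "H x1 \<beta> \<and> H x3 \<alpha>"
    then obtain w z where "{x1, w} \<in> E" "c {x1, w} = \<beta>" "{x3, z} \<in> E" "c {x3, z} = \<alpha>"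
      unfolding H_def by blast
    then show False using bichrom[OF sg st, of x1 w x2 x3 z] that by auto
  qed
  have T1: "\<not> (H v2 b \<and> H v3 a)"
    by (rule B[of v2 v0 v3]) (use e02 e03 n02 n03 n23 a_def b_def in \<open>auto simp: insert_commute\<close>)
  have T2: "\<not> (H v0 d \<and> H v3 a)"
    by (rule B[of v0 v2 v3]) (use e02 e23 n02 n03 n23 a_def d_def in \<open>auto simp: insert_commute\<close>)
  have T3: "\<not> (H v0 d \<and> H v2 b)"
    by (rule B[of v0 v3 v2]) (use e03 e23 n02 n03 n23 b_def d_def in \<open>auto simp: insert_commute\<close>)
  have E5: "\<not> (H v2 q \<and> H v3 p)"
    by (rule B[of v2 v5 v3]) (use e25 e35 n25 n35 n23 p_def q_def in \<open>auto simp: insert_commute\<close>)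
  have E1: "\<not> (H v0 s \<and> H v2 r)"
    by (rule B[of v0 v1 v2]) (use e01 e12 n01 n12 n02 r_def s_def in \<open>auto simp: insert_commute\<close>)
  have E4: "\<not> (H v0 u \<and> H v3 t)"
    by (rule B[of v0 v4 v3]) (use e04 e34 n04 n34 n03 t_def u_def in \<open>auto simp: insert_commute\<close>)
  show False using M1 M2 M3 M4 M5 M6 T1 T2 T3 E5 E1 E4 by blast
qed

theorem theorem3p4:
  fixes V :: "'a set" and E :: "'a set set" and v :: "nat \<Rightarrow> 'a"
  assumes "maximal_outerplanar V E"
    and "has_diameter V E 3"
    and "\<forall>i<6. v i \<in> V"
    and "inj_on v {..<6}"
    and "\<forall>i<6. \<forall>j<6. i \<noteq> j \<longrightarrow> ({v i, v j} \<in> E \<longleftrightarrow> {i, j} \<in> G61_edges)"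
    and "degree E (v 0) = max_degree V E"
    and "degree E (v 2) = max_degree V E"
    and "degree E (v 3) = max_degree V E"
  shows "star_chromatic_index E \<ge> max_degree V E + 2"
proof -
  define D where "D = max_degree V E"
  have sg: "simple_graph V E" using assms(1) unfolding maximal_outerplanar_def by blast
  have ed: "{v i, v j} \<in> E" if "i < 6" "j < 6" "i \<noteq> j" "{i, j} \<in> G61_edges" for i j
    using assms(5) that by blast
  have e01: "{v 0, v 1} \<in> E" by (rule ed) (auto simp: G61_edges_def doubleton_eq_iff)
  have e02: "{v 0, v 2} \<in> E" by (rule ed) (auto simp: G61_edges_def doubleton_eq_iff)
  have e03: "{v 0, v 3} \<in> E" by (rule ed) (auto simp: G61_edges_def doubleton_eq_iff)
  have e04: "{v 0, v 4} \<in> E" by (rule ed) (auto simp: G61_edges_def doubleton_eq_iff)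
  have e12: "{v 1, v 2} \<in> E" by (rule ed) (auto simp: G61_edges_def doubleton_eq_iff)
  have e23: "{v 2, v 3} \<in> E" by (rule ed) (auto simp: G61_edges_def doubleton_eq_iff)
  have e25: "{v 2, v 5} \<in> E" by (rule ed) (auto simp: G61_edges_def doubleton_eq_iff)
  have e34: "{v 3, v 4} \<in> E" by (rule ed) (auto simp: G61_edges_def doubleton_eq_iff)
  have e35: "{v 3, v 5} \<in> E" by (rule ed) (auto simp: G61_edges_def doubleton_eq_iff)
  have dm: "distinct (map v [0..<6])"
    using assms(4) by (simp add: distinct_map lessThan_atLeast0)
  have mm: "map v [0..<6] = [v 0, v 1, v 2, v 3, v 4, v 5]" by (simp add: upt_rec numeral_eq_Suc)
  have dv: "distinct [v 0, v 1, v 2, v 3, v 4, v 5]" using dm mm by metis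
  define P where "P = (\<lambda>k. \<exists>c. star_edge_coloring E c \<and> c ` E \<subseteq> {..<k})"
  have fE: "finite E"
  proof -
    have "E \<subseteq> Pow V" using sg unfolding simple_graph_def by auto
    moreover have "finite V" using sg unfolding simple_graph_def by auto
    ultimately show ?thesis by (meson finite_Pow_iff finite_subset)
  qed
  have ex: "P (card E)"
  proof -
    obtain g where g: "bij_betw g E {0..<card E}" using ex_bij_betw_finite_nat[OF fE] by blast
    have inj: "inj_on g E" using g bij_betw_def by blast
    have rg: "g ` E \<subseteq> {..<card E}" using g unfolding bij_betw_def by auto
    have "star_edge_coloring E g"
      unfolding star_edge_coloring_def proper_edge_coloring_def
    proof (intro conjI ballI allI impI)
      fix e e' assume "e \<in> E" "e' \<in> E" "e \<noteq> e'"
      then show "g e \<noteq> g e'" using inj by (meson inj_onD)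
    next
      fix x0 x1 x2 x3 x4 :: 'a
      assume h: "distinct [x0, x1, x2, x3] \<and> (x4 = x0 \<or> distinct [x0, x1, x2, x3, x4]) \<and>
        {x0, x1} \<in> E \<and> {x1, x2} \<in> E \<and> {x2, x3} \<in> E \<and> {x3, x4} \<in> E"
      let ?F = "{{x0, x1}, {x1, x2}, {x2, x3}, {x3, x4}}"
      have sub: "?F \<subseteq> E" using h by auto
      have "card ?F = 4"
        by (rule card4[OF dist_sets[OF conjunct1[OF h] conjunct1[OF conjunct2[OF h]]]])
      moreover have "card (g ` ?F) = card ?F"
        by (rule card_image) (rule inj_on_subset[OF inj sub])
      ultimately show "card (g ` ?F) \<noteq> 2" by simp
    qed
    then show ?thesis unfolding P_def using rg by blast
  qed
  have lb: "D + 2 \<le> k" if Pk: "P k" for k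
  proof (rule ccontr)
    assume "\<not> D + 2 \<le> k"
    then have kk: "{..<k} \<subseteq> {..<D+1}" by (simp add: lessThan_subset_iff)
    obtain c where st: "star_edge_coloring E c" and rng0: "c ` E \<subseteq> {..<k}"
      using Pk unfolding P_def by (elim exE conjE)
    have rng: "c ` E \<subseteq> {..<D+1}" using rng0 kk by (rule subset_trans)
    show False
      by (rule core[OF sg st rng _ _ _ e01 e02 e03 e04 e12 e23 e25 e34 e35])
         (use assms(6-8) D_def dv in auto)
  qed
  have "P (Least P)" using LeastI[of P, OF ex] .
  then have "D + 2 \<le> Least P" by (rule lb)
  then show ?thesis unfolding star_chromatic_index_def D_def P_def .
qed

end
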